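(* Let $m$ be an odd positive integer, let $r,s\in\mathbb{Z}$ with $2^{-1}+r^2+s^2\equiv0\pmod m$, and let $\tau:H_{1,2,2}/mH_{1,2,2}\to M_2(\mathbb{Z}/m\mathbb{Z})$ be the map defined as follows: writing $\mathbf{q}\equiv q_1+q_2\mathbf{i}+q_3\sqrt2\,\mathbf{j}+q_4\sqrt2\,\mathbf{k}\pmod{mH_{1,2,2}}$ with $q_i\in\mathbb{Z}$, $\tau(\mathbf{q})=\begin{pmatrix}q_1-2rq_3-2sq_4 & q_2-2sq_3+2rq_4\\ -q_2-2sq_3+2rq_4 & q_1+2rq_3+2sq_4\end{pmatrix}$ modulo $m$. Then $\mathbf{q}\in H_{1,2,2}$ is primitive to $m$ if and only if the matrix $\tau(\mathbf{q})$ is primitive to $m$.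
   Context: Let $\mathbf{i},\mathbf{j},\mathbf{k}$ be the standard quaternion units. $H_{1,2,2}$ is the subring of the quaternions equal to the $\mathbb{Z}$-module generated by $\mathbf{v}_1=1$, $\mathbf{v}_2=\mathbf{i}$, $\mathbf{v}_3=\tfrac12(1+\mathbf{i}+\sqrt2\,\mathbf{j})$, $\mathbf{v}_4=\tfrac12(1+\mathbf{i}+\sqrt2\,\mathbf{k})$. An element $\mathbf{g}=g_1\mathbf{v}_1+g_2\mathbf{v}_2+g_3\mathbf{v}_3+g_4\mathbf{v}_4$ ($g_i\in\mathbb{Z}$) is primitive to $m$ if $\gcd(g_1,g_2,g_3,g_4,m)=1$; this depends only on the class of $\mathbf{g}$ modulo $mH_{1,2,2}$. A matrix $\begin{pmatrix}\alpha&\beta\\\gamma&\delta\end{pmatrix}$ over $\mathbb{Z}/m\mathbb{Z}$ is primitive to $m$ if $\gcd(\alpha,\beta,\gamma,\delta,m)=1$. $2^{-1}$ denotes the inverse of $2$ modulo $m$. *)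

theory Defs
  imports "HOL-Analysis.Analysis" "HOL-Number_Theory.Number_Theory"
begin

text \<open>Quaternions are represented by their real coordinates w.r.t. 1, i, j, k.\<close>
type_synonym quat = "real \<times> real \<times> real \<times> real"

definition v1 :: quat where "v1 = (1, 0, 0, 0)"
definition v2 :: quat where "v2 = (0, 1, 0, 0)"
definition v3 :: quat where "v3 = (1/2, 1/2, sqrt 2 / 2, 0)"
definition v4 :: quat where "v4 = (1/2, 1/2, 0, sqrt 2 / 2)"

definition H122 :: "int \<Rightarrow> int \<Rightarrow> int \<Rightarrow> int \<Rightarrow> quat" where
  "H122 g1 g2 g3 g4 = of_int g1 *\<^sub>R v1 + of_int g2 *\<^sub>R v2 + of_int g3 *\<^sub>R v3 + of_int g4 *\<^sub>R v4"

definition std_quat :: "int \<Rightarrow> int \<Rightarrow> int \<Rightarrow> int \<Rightarrow> quat" where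
  "std_quat q1 q2 q3 q4 = (of_int q1, of_int q2, sqrt 2 * of_int q3, sqrt 2 * of_int q4)"

definition cong_mH :: "int \<Rightarrow> quat \<Rightarrow> quat \<Rightarrow> bool" where
  "cong_mH m x y \<longleftrightarrow> (\<exists>h1 h2 h3 h4. x - y = of_int m *\<^sub>R H122 h1 h2 h3 h4)"

definition prim_H :: "int \<Rightarrow> int \<Rightarrow> int \<Rightarrow> int \<Rightarrow> int \<Rightarrow> bool" where
  "prim_H m g1 g2 g3 g4 \<longleftrightarrow> gcd (gcd (gcd g1 g2) (gcd g3 g4)) m = 1"

text \<open>2x2 matrices over Z/mZ as tuples (alpha, beta, gamma, delta) of residues.\<close>
definition prim_mat :: "int \<Rightarrow> int \<times> int \<times> int \<times> int \<Rightarrow> bool" where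
  "prim_mat m A = (case A of (a, b, c, d) \<Rightarrow>
      gcd (gcd (gcd a b) (gcd c d)) m = 1)"

definition inv2 :: "int \<Rightarrow> int" where "inv2 m = (m + 1) div 2"

definition tau :: "int \<Rightarrow> int \<Rightarrow> int \<Rightarrow> int \<Rightarrow> int \<Rightarrow> int \<Rightarrow> int \<Rightarrow> int \<times> int \<times> int \<times> int" where
  "tau m r s q1 q2 q3 q4 =
     ((q1 - 2 * r * q3 - 2 * s * q4) mod m, (q2 - 2 * s * q3 + 2 * r * q4) mod m,
      (- q2 - 2 * s * q3 + 2 * r * q4) mod m, (q1 + 2 * r * q3 + 2 * s * q4) mod m)"

end

theory Submission
  imports Defs
begin

lemma gcd5_iff:
  fixes a b c d m :: int
  shows "gcd (gcd (gcd a b) (gcd c d)) m = 1 \<longleftrightarrow>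
    (\<forall>e. e dvd a \<and> e dvd b \<and> e dvd c \<and> e dvd d \<and> e dvd m \<longrightarrow> is_unit e)"
proof
  assume h: "gcd (gcd (gcd a b) (gcd c d)) m = 1"
  show "\<forall>e. e dvd a \<and> e dvd b \<and> e dvd c \<and> e dvd d \<and> e dvd m \<longrightarrow> is_unit e"
  proof (intro allI impI)
    fix e assume "e dvd a \<and> e dvd b \<and> e dvd c \<and> e dvd d \<and> e dvd m"
    then have "e dvd gcd (gcd (gcd a b) (gcd c d)) m" by simp
    then show "is_unit e" using h by simp
  qed
next
  assume h: "\<forall>e. e dvd a \<and> e dvd b \<and> e dvd c \<and> e dvd d \<and> e dvd m \<longrightarrow> is_unit e"
  let ?g = "gcd (gcd (gcd a b) (gcd c d)) m"
  have "?g dvd a" "?g dvd b" "?g dvd c" "?g dvd d" "?g dvd m"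
    by (meson dvd_trans gcd_dvd1 gcd_dvd2)+
  then have "is_unit ?g" using h by blast
  then show "?g = 1" by simp
qed

theorem theorem30:
  fixes m r s g1 g2 g3 g4 q1 q2 q3 q4 :: int
  assumes "m > 0" and "odd m"
    and "[inv2 m + r^2 + s^2 = 0] (mod m)"
    and "cong_mH m (H122 g1 g2 g3 g4) (std_quat q1 q2 q3 q4)"
  shows "prim_H m g1 g2 g3 g4 \<longleftrightarrow> prim_mat m (tau m r s q1 q2 q3 q4)"
proof -
  define i where "i = inv2 m"
  have i2: "i * 2 = m + 1" unfolding i_def inv2_def using assms(2) by (metis dvd_div_mult_self even_add odd_one)
  obtain k where k: "i + r^2 + s^2 = m * k"
    using assms(3) unfolding i_def by (metis cong_0_iff dvdE)
  obtain h1 h2 h3 h4 where h: "H122 g1 g2 g3 g4 - std_quat q1 q2 q3 q4 = of_int m *\<^sub>R H122 h1 h2 h3 h4"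
    using assms(4) unfolding cong_mH_def by blast
  have s2: "sqrt (2::real) \<noteq> 0" by simp
  from h have e1: "real_of_int g1 + g3/2 + g4/2 - q1 = m * (h1 + h3/2 + h4/2)"
    and e2: "real_of_int g2 + g3/2 + g4/2 - q2 = m * (h2 + h3/2 + h4/2)"
    and e3: "real_of_int g3 * (sqrt 2 / 2) - sqrt 2 * q3 = m * (h3 * (sqrt 2 / 2))"
    and e4: "real_of_int g4 * (sqrt 2 / 2) - sqrt 2 * q4 = m * (h4 * (sqrt 2 / 2))"
    by (simp_all add: H122_def std_quat_def v1_def v2_def v3_def v4_def algebra_simps)
  from e3 have "sqrt 2 * (real_of_int g3 - 2 * q3 - m * h3) = 0"
    by (simp add: algebra_simps)
  hence "real_of_int (g3 - 2 * q3 - m * h3) = 0" using s2 by simp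
  hence G3: "g3 = 2 * q3 + m * h3" by linarith
  from e4 have "sqrt 2 * (real_of_int g4 - 2 * q4 - m * h4) = 0"
    by (simp add: algebra_simps)
  hence "real_of_int (g4 - 2 * q4 - m * h4) = 0" using s2 by simp
  hence G4: "g4 = 2 * q4 + m * h4" by linarith
  from e1 have "real_of_int (2*g1 + g3 + g4 - 2*q1) = of_int (m * (2*h1 + h3 + h4))"
    by (simp add: field_simps)
  hence "2*g1 + g3 + g4 - 2*q1 = m * (2*h1 + h3 + h4)" using of_int_eq_iff by blast
  hence G1: "g1 = q1 - q3 - q4 + m * h1" using G3 G4 by (simp add: algebra_simps)
  from e2 have "real_of_int (2*g2 + g3 + g4 - 2*q2) = of_int (m * (2*h2 + h3 + h4))"
    by (simp add: field_simps)
  hence "2*g2 + g3 + g4 - 2*q2 = m * (2*h2 + h3 + h4)" using of_int_eq_iff by blast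
  hence G2: "g2 = q2 - q3 - q4 + m * h2" using G3 G4 by (simp add: algebra_simps)
  have rs: "r^2 + s^2 = m * k - i" using k by linarith
  define a where "a = q1 - 2 * r * q3 - 2 * s * q4"
  define b where "b = q2 - 2 * s * q3 + 2 * r * q4"
  define c where "c = - q2 - 2 * s * q3 + 2 * r * q4"
  define d where "d = q1 + 2 * r * q3 + 2 * s * q4"
  have tau: "tau m r s q1 q2 q3 q4 = (a mod m, b mod m, c mod m, d mod m)"
    unfolding tau_def a_def b_def c_def d_def by simp
  have "i * (g3 - m * h3) = (i * 2) * q3" using G3 by simp
  hence Q3: "q3 = i * (g3 - m * h3) - m * q3" using i2 by (simp add: algebra_simps)
  have "i * (g4 - m * h4) = (i * 2) * q4" using G4 by simp
  hence Q4: "q4 = i * (g4 - m * h4) - m * q4" using i2 by (simp add: algebra_simps)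
  have Q1: "q1 = g1 + q3 + q4 - m * h1" using G1 by simp
  have Q2: "q2 = g2 + q3 + q4 - m * h2" using G2 by simp
  have "i * (a + d) = (i * 2) * q1" unfolding a_def d_def by (simp add: algebra_simps)
  hence R1: "q1 = i * (a + d) - m * q1" using i2 by (simp add: algebra_simps)
  have "i * (b - c) = (i * 2) * q2" unfolding b_def c_def by (simp add: algebra_simps)
  hence R2: "q2 = i * (b - c) - m * q2" using i2 by (simp add: algebra_simps)
  have "r * (d - a) - s * (b + c) = 4 * (r^2 + s^2) * q3"
    unfolding a_def b_def c_def d_def by (simp add: algebra_simps power2_eq_square)
  also have "\<dots> = 4 * (m * k - i) * q3" using rs by (simp only:)
  finally have "r * (d - a) - s * (b + c) = 4 * m * k * q3 - 2 * (i * 2) * q3"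
    by (simp add: algebra_simps)
  hence X3: "2 * q3 = 4 * m * k * q3 - 2 * m * q3 - (r * (d - a) - s * (b + c))"
    unfolding i2 by (simp add: algebra_simps)
  have "i * (4 * m * k * q3 - 2 * m * q3 - (r * (d - a) - s * (b + c))) = (i * 2) * q3"
    using X3 by (metis mult.assoc mult.commute)
  hence R3: "q3 = i * (4 * m * k * q3 - 2 * m * q3 - (r * (d - a) - s * (b + c))) - m * q3"
    using i2 by (simp add: algebra_simps)
  have "s * (d - a) + r * (b + c) = 4 * (r^2 + s^2) * q4"
    unfolding a_def b_def c_def d_def by (simp add: algebra_simps power2_eq_square)
  also have "\<dots> = 4 * (m * k - i) * q4" using rs by (simp only:)
  finally have "s * (d - a) + r * (b + c) = 4 * m * k * q4 - 2 * (i * 2) * q4"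
    by (simp add: algebra_simps)
  hence X4: "2 * q4 = 4 * m * k * q4 - 2 * m * q4 - (s * (d - a) + r * (b + c))"
    unfolding i2 by (simp add: algebra_simps)
  have "i * (4 * m * k * q4 - 2 * m * q4 - (s * (d - a) + r * (b + c))) = (i * 2) * q4"
    using X4 by (metis mult.assoc mult.commute)
  hence R4: "q4 = i * (4 * m * k * q4 - 2 * m * q4 - (s * (d - a) + r * (b + c))) - m * q4"
    using i2 by (simp add: algebra_simps)
  have eq1: "(\<forall>e. e dvd g1 \<and> e dvd g2 \<and> e dvd g3 \<and> e dvd g4 \<and> e dvd m \<longrightarrow> is_unit e) \<longleftrightarrow>
        (\<forall>e. e dvd q1 \<and> e dvd q2 \<and> e dvd q3 \<and> e dvd q4 \<and> e dvd m \<longrightarrow> is_unit e)"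
  proof -
    have "e dvd g1 \<and> e dvd g2 \<and> e dvd g3 \<and> e dvd g4 \<and> e dvd m \<longleftrightarrow>
          e dvd q1 \<and> e dvd q2 \<and> e dvd q3 \<and> e dvd q4 \<and> e dvd m" for e
    proof
      assume H: "e dvd g1 \<and> e dvd g2 \<and> e dvd g3 \<and> e dvd g4 \<and> e dvd m"
      have 3: "e dvd q3" using H by (subst Q3) simp
      have 4: "e dvd q4" using H by (subst Q4) simp
      have "e dvd q1" using H 3 4 by (subst Q1) simp
      moreover have "e dvd q2" using H 3 4 by (subst Q2) simp
      ultimately show "e dvd q1 \<and> e dvd q2 \<and> e dvd q3 \<and> e dvd q4 \<and> e dvd m" using H 3 4 by simp
    next
      assume H: "e dvd q1 \<and> e dvd q2 \<and> e dvd q3 \<and> e dvd q4 \<and> e dvd m"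
      then show "e dvd g1 \<and> e dvd g2 \<and> e dvd g3 \<and> e dvd g4 \<and> e dvd m"
        unfolding G1 G2 G3 G4 by simp
    qed
    then show ?thesis by simp
  qed
  have eq2: "(\<forall>e. e dvd a mod m \<and> e dvd b mod m \<and> e dvd c mod m \<and> e dvd d mod m \<and> e dvd m \<longrightarrow> is_unit e) \<longleftrightarrow>
        (\<forall>e. e dvd q1 \<and> e dvd q2 \<and> e dvd q3 \<and> e dvd q4 \<and> e dvd m \<longrightarrow> is_unit e)"
  proof -
    have "e dvd a mod m \<and> e dvd b mod m \<and> e dvd c mod m \<and> e dvd d mod m \<and> e dvd m \<longleftrightarrow>
          e dvd q1 \<and> e dvd q2 \<and> e dvd q3 \<and> e dvd q4 \<and> e dvd m" for e
    proof (cases "e dvd m")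
      case True
      have "e dvd a \<and> e dvd b \<and> e dvd c \<and> e dvd d \<longleftrightarrow>
          e dvd q1 \<and> e dvd q2 \<and> e dvd q3 \<and> e dvd q4"
      proof
        assume H: "e dvd a \<and> e dvd b \<and> e dvd c \<and> e dvd d"
        have "e dvd q1" using H True by (subst R1) simp
        moreover have "e dvd q2" using H True by (subst R2) simp
        moreover have "e dvd q3" using H True by (subst R3) simp
        moreover have "e dvd q4" using H True by (subst R4) simp
        ultimately show "e dvd q1 \<and> e dvd q2 \<and> e dvd q3 \<and> e dvd q4" by simp
      next
        assume H: "e dvd q1 \<and> e dvd q2 \<and> e dvd q3 \<and> e dvd q4"
        then show "e dvd a \<and> e dvd b \<and> e dvd c \<and> e dvd d"
          unfolding a_def b_def c_def d_def by simp
      qed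
      then show ?thesis using True by (simp add: dvd_mod_iff)
    qed simp
    then show ?thesis by simp
  qed
  show ?thesis
    unfolding prim_H_def prim_mat_def tau gcd5_iff using eq1 eq2 by simp
qed

end
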